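(* Let $G$ be a graph of order $n$. Then $\alpha(G) \le m_G[0,\,n-\alpha(G)]$.
   Context: All graphs are finite and simple. The Laplacian matrix of $G$ is $L(G)=D(G)-A(G)$, where $D(G)$ is the diagonal matrix of vertex degrees and $A(G)$ the adjacency matrix; its eigenvalues (with multiplicity) are the Laplacian eigenvalues of $G$. For an interval $I\subseteq\mathbb{R}$, $m_G I$ denotes the number of Laplacian eigenvalues of $G$, counted with multiplicity, lying in $I$. $\alpha(G)$ denotes the independence number of $G$. *)

theory Defs
  imports "Jordan_Normal_Form.Char_Poly"
begin

definition simple_graph :: "nat \<Rightarrow> (nat \<Rightarrow> nat \<Rightarrow> bool) \<Rightarrow> bool" where
  "simple_graph n E \<longleftrightarrow> (\<forall>u<n. \<forall>v<n. E u v \<longleftrightarrow> E v u) \<and> (\<forall>v<n. \<not> E v v)"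

definition degree :: "nat \<Rightarrow> (nat \<Rightarrow> nat \<Rightarrow> bool) \<Rightarrow> nat \<Rightarrow> nat" where
  "degree n E v = card {u. u < n \<and> E v u}"

definition laplacian :: "nat \<Rightarrow> (nat \<Rightarrow> nat \<Rightarrow> bool) \<Rightarrow> real mat" where
  "laplacian n E = mat n n (\<lambda>(i,j). (if i = j then real (degree n E i) else 0)
                                     - (if E i j then 1 else 0))"

definition lap_eig_count :: "nat \<Rightarrow> (nat \<Rightarrow> nat \<Rightarrow> bool) \<Rightarrow> real set \<Rightarrow> nat" where
  "lap_eig_count n E I =
     (\<Sum>x\<in>{x. poly (char_poly (laplacian n E)) x = 0 \<and> x \<in> I}.
        order x (char_poly (laplacian n E)))"

definition independent_set :: "nat \<Rightarrow> (nat \<Rightarrow> nat \<Rightarrow> bool) \<Rightarrow> nat set \<Rightarrow> bool" where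
  "independent_set n E S \<longleftrightarrow> S \<subseteq> {0..<n} \<and> (\<forall>u\<in>S. \<forall>v\<in>S. \<not> E u v)"

definition independence_number :: "nat \<Rightarrow> (nat \<Rightarrow> nat \<Rightarrow> bool) \<Rightarrow> nat" where
  "independence_number n E = Max (card ` {S. independent_set n E S})"

end

theory Submission
  imports Defs
begin
lemma sym_real_eigenvalue:
  fixes A :: "real mat"
  assumes A: "A \<in> carrier_mat n n" and sym: "\<And>i j. i < n \<Longrightarrow> j < n \<Longrightarrow> A $$ (i,j) = A $$ (j,i)"
    and n: "n > 0"
  shows "\<exists>e. eigenvalue A e"
proof -
  let ?C = "map_mat complex_of_real A"
  have C: "?C \<in> carrier_mat n n" using A by auto
  obtain as where cp: "char_poly ?C = (\<Prod>a\<leftarrow>as. [:-a,1:])" and len: "length as = n"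
    using char_poly_factorized[OF C] by blast
  define a where "a = hd as"
  have "a \<in> set as" using len n unfolding a_def by (cases as) auto
  hence "poly (char_poly ?C) a = 0" unfolding cp poly_prod_list
    by (auto simp: prod_list_zero_iff)
  hence "eigenvalue ?C a" using eigenvalue_root_char_poly[OF C] by auto
  then obtain w where w: "eigenvector ?C w a" unfolding eigenvalue_def by auto
  hence wc: "w \<in> carrier_vec n" and w0: "w \<noteq> 0\<^sub>v n" and ev: "?C *\<^sub>v w = a \<cdot>\<^sub>v w"
    unfolding eigenvector_def using C by auto
  have evi: "(\<Sum>j<n. of_real (A $$ (i,j)) * w $ j) = a * w $ i" if "i < n" for i
  proof -
    have "(?C *\<^sub>v w) $ i = a * w $ i" using ev that wc by simp
    thus ?thesis using that A wc by (simp add: scalar_prod_def row_def lessThan_atLeast0)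
  qed
  define s where "s = (\<Sum>i<n. cnj (w $ i) * (\<Sum>j<n. of_real (A $$ (i,j)) * w $ j))"
  define N where "N = (\<Sum>i<n. cnj (w $ i) * w $ i)"
  have "s = (\<Sum>i<n. cnj (w $ i) * (a * w $ i))" unfolding s_def by (rule sum.cong, auto simp: evi)
  hence sN: "s = a * N" unfolding N_def by (simp add: sum_distrib_left mult_ac)
  have "cnj s = (\<Sum>i<n. w $ i * (\<Sum>j<n. of_real (A $$ (i,j)) * cnj (w $ j)))"
    unfolding s_def by (simp add: cnj_sum)
  also have "\<dots> = (\<Sum>i<n. \<Sum>j<n. w $ i * of_real (A $$ (i,j)) * cnj (w $ j))"
    by (simp add: sum_distrib_left mult_ac)
  also have "\<dots> = (\<Sum>j<n. \<Sum>i<n. w $ i * of_real (A $$ (i,j)) * cnj (w $ j))"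
    by (rule sum.swap)
  also have "\<dots> = s" unfolding s_def
    by (auto simp: sum_distrib_left mult_ac sym intro!: sum.cong)
  finally have sreal: "cnj s = s" .
  have Nreal: "cnj N = N" unfolding N_def by (simp add: cnj_sum mult_ac)
  have "N \<noteq> 0"
  proof
    assume N0: "N = 0"
    have "N = (\<Sum>i<n. of_real ((cmod (w $ i))^2))" unfolding N_def
      by (rule sum.cong, simp, subst complex_norm_square, simp add: mult.commute)
    hence "N = of_real (\<Sum>i<n. (cmod (w $ i))^2)" by simp
    hence "(\<Sum>i<n. (cmod (w $ i))^2) = 0" using N0 by (metis of_real_eq_0_iff)
    hence "\<forall>i\<in>{..<n}. (cmod (w $ i))^2 = 0" by (subst (asm) sum_nonneg_eq_0_iff) auto
    hence "w = 0\<^sub>v n" using wc by (intro eq_vecI) auto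
    thus False using w0 by simp
  qed
  have "cnj a = a"
  proof -
    have "cnj a * N = a * N" using sreal Nreal sN by (metis complex_cnj_mult)
    thus ?thesis using \<open>N \<noteq> 0\<close> by simp
  qed
  hence aR: "a = of_real (Re a)" by (metis complex_cnj_complex_of_real Reals_cnj_iff complex_is_Real_iff of_real_Re)
  have "complex_of_real (poly (char_poly A) (Re a)) = poly (char_poly ?C) a"
    using of_real_hom.char_poly_hom[OF A] aR by (metis of_real_hom.poly_map_poly)
  hence "poly (char_poly A) (Re a) = 0" using \<open>poly (char_poly ?C) a = 0\<close> by simp
  thus ?thesis using eigenvalue_root_char_poly[OF A] by auto
qed
lemma householder:
  fixes u :: "real vec"
  assumes n: "0 < n" and nu: "(\<Sum>i<n. u$i * u$i) = 1"
  shows "\<exists>H. H \<in> carrier_mat n n \<and> H\<^sup>T = H \<and> H * H = 1\<^sub>m n \<and> (\<forall>i<n. H $$ (i,0) = u $ i)"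
proof (cases "u $ 0 = 1")
  case True
  have "(\<Sum>i<n. u$i * u$i) = u$0 * u$0 + (\<Sum>i\<in>{..<n}-{0}. u$i * u$i)"
    using n by (subst sum.remove[of _ 0]) auto
  hence "(\<Sum>i\<in>{..<n}-{0}. u$i * u$i) = 0" using nu True by simp
  hence z: "\<forall>i\<in>{..<n}-{0}. u$i * u$i = 0" by (subst (asm) sum_nonneg_eq_0_iff) auto
  show ?thesis
    by (rule exI[of _ "1\<^sub>m n"], insert z True, auto)
next
  case False
  define w where "w i = u $ i - (if i = 0 then 1 else 0)" for i
  define a where "a = 1 / (1 - u $ 0)"
  define H where "H = mat n n (\<lambda>(i,j). (if i = j then 1 else 0) - a * w i * w j)"
  have ww: "(\<Sum>k<n. w k * w k) = 2 * (1 - u $ 0)"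
  proof -
    have "(\<Sum>k<n. w k * w k) = (\<Sum>k<n. u$k * u$k) - 2 * (\<Sum>k<n. if k = 0 then u $ k else 0)
       + (\<Sum>k<n. if k = 0 then 1 else 0)"
      unfolding w_def by (simp add: algebra_simps sum.distrib sum_subtractf sum_distrib_left
          if_distrib[of "\<lambda>x. _ * x"] if_distrib[of "\<lambda>x. x * _"] cong: if_cong)
    also have "\<dots> = 2 * (1 - u $ 0)" using n nu by simp
    finally show ?thesis .
  qed
  have a1: "a * (1 - u $ 0) = 1" unfolding a_def using False by simp
  have "a * a * (2 * (1 - u $ 0)) = 2 * a * (a * (1 - u $ 0))" by (simp only: mult_ac)
  hence a2: "a * a * (2 * (1 - u $ 0)) = 2 * a" using a1 by simp
  have HH: "H * H = 1\<^sub>m n"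
  proof (rule eq_matI)
    fix i j assume i: "i < dim_row (1\<^sub>m n)" and j: "j < dim_col (1\<^sub>m n)"
    hence i: "i < n" and j: "j < n" by auto
    have "(H * H) $$ (i,j) = (\<Sum>k<n. ((if i = k then 1 else 0) - a * w i * w k) * ((if k = j then 1 else 0) - a * w k * w j))"
      using i j unfolding H_def by (simp add: scalar_prod_def row_def col_def lessThan_atLeast0)
    also have "\<dots> = (\<Sum>k<n. (if i = k then 1 else 0) * (if k = j then 1 else 0))
       - (\<Sum>k<n. (if i = k then 1 else 0) * (a * w k * w j)) - (\<Sum>k<n. a * w i * w k * (if k = j then 1 else 0))
       + (\<Sum>k<n. a * w i * w k * (a * w k * w j))"
      by (simp add: algebra_simps sum.distrib sum_subtractf)
    also have "(\<Sum>k<n. (if i = k then 1 else 0) * (if k = j then (1::real) else 0)) = (if i = j then 1 else 0)"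
      using i j by (simp add: if_distrib[of "\<lambda>x. x * _"] cong: if_cong)
    also have "(\<Sum>k<n. (if i = k then 1 else 0) * (a * w k * w j)) = a * w i * w j"
      using i by (simp add: if_distrib[of "\<lambda>x. x * _"] cong: if_cong)
    also have "(\<Sum>k<n. a * w i * w k * (if k = j then 1 else 0)) = a * w i * w j"
      using j by (simp add: if_distrib[of "\<lambda>x. _ * x"] cong: if_cong)
    also have "(\<Sum>k<n. a * w i * w k * (a * w k * w j)) = a * a * w i * w j * (\<Sum>k<n. w k * w k)"
      by (simp add: sum_distrib_left mult_ac)
    also have "(if i = j then 1 else 0) - a * w i * w j - a * w i * w j + a * a * w i * w j * (\<Sum>k<n. w k * w k)
      = (if i = j then 1 else 0) + (a * a * (2 * (1 - u $ 0)) - 2 * a) * (w i * w j)"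
      by (simp add: ww algebra_simps)
    also have "\<dots> = 1\<^sub>m n $$ (i,j)" using i j a2 by simp
    finally show "(H * H) $$ (i,j) = 1\<^sub>m n $$ (i,j)" .
  qed (auto simp: H_def)
  have HT: "H\<^sup>T = H" unfolding H_def by (rule eq_matI) auto
  have col: "H $$ (i,0) = u $ i" if i: "i < n" for i
  proof -
    have "a * w 0 = -1" unfolding a_def w_def using False by (simp add: field_simps)
    hence "a * w i * w 0 = - w i" by (metis mult.commute mult.left_commute mult_minus1_right)
    thus ?thesis using i n unfolding H_def by (simp add: w_def)
  qed
  show ?thesis using HH HT col by (intro exI[of _ H]) (auto simp: H_def)
qed

lemma spectral_real:
  fixes A :: "real mat"
  assumes "A \<in> carrier_mat n n" "\<forall>i<n. \<forall>j<n. A $$ (i,j) = A $$ (j,i)"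
  shows "\<exists>P D. similar_mat_wit A D P P\<^sup>T \<and> diagonal_mat D"
  using assms
proof (induction n arbitrary: A)
  case 0
  show ?case
    by (rule exI[of _ "1\<^sub>m 0"], rule exI[of _ A], insert 0,
        auto simp: similar_mat_wit_refl diagonal_mat_def)
next
  case (Suc m A)
  let ?n = "Suc m"
  have A: "A \<in> carrier_mat ?n ?n" using Suc by auto
  have sym: "\<And>i j. i < ?n \<Longrightarrow> j < ?n \<Longrightarrow> A $$ (i,j) = A $$ (j,i)" using Suc by auto
  obtain e where "eigenvalue A e" using sym_real_eigenvalue[OF A sym] by auto
  hence "eigenvector A (find_eigenvector A e) e" by (rule find_eigenvector[OF A])
  then obtain v where v: "v \<in> carrier_vec ?n" "v \<noteq> 0\<^sub>v ?n" and Av: "A *\<^sub>v v = e \<cdot>\<^sub>v v"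
    unfolding eigenvector_def using A by auto
  define nv where "nv = (\<Sum>i<?n. v$i * v$i)"
  have nv0: "nv > 0"
  proof -
    have "nv \<ge> 0" unfolding nv_def by (intro sum_nonneg) auto
    moreover have "nv \<noteq> 0"
    proof
      assume "nv = 0"
      hence "\<forall>i\<in>{..<?n}. v$i * v$i = 0" unfolding nv_def by (subst (asm) sum_nonneg_eq_0_iff) auto
      hence "v = 0\<^sub>v ?n" using v by (intro eq_vecI) auto
      thus False using v by simp
    qed
    ultimately show ?thesis by simp
  qed
  define u where "u = (1 / sqrt nv) \<cdot>\<^sub>v v"
  have u: "u \<in> carrier_vec ?n" unfolding u_def using v by simp
  have Au: "A *\<^sub>v u = e \<cdot>\<^sub>v u" unfolding u_def using A v Av
    by (simp add: mult_mat_vec smult_smult_assoc mult.commute)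
  have nu: "(\<Sum>i<?n. u$i * u$i) = 1"
  proof -
    have "(\<Sum>i<?n. u$i * u$i) = (\<Sum>i<?n. (1/nv) * (v$i * v$i))"
      unfolding u_def using v nv0 by (intro sum.cong) (auto simp: power2_eq_square[symmetric] power_divide)
    also have "\<dots> = (1/nv) * nv" unfolding nv_def by (rule sum_distrib_left[symmetric])
    also have "\<dots> = 1" using nv0 by simp
    finally show ?thesis .
  qed
  obtain H where H: "H \<in> carrier_mat ?n ?n" and HT: "H\<^sup>T = H" and HH: "H * H = 1\<^sub>m ?n"
    and Hc: "\<forall>i<?n. H $$ (i,0) = u $ i"
    using householder[of ?n u] nu by auto
  define e0 :: "real vec" where "e0 = unit_vec ?n 0"
  have e0: "e0 \<in> carrier_vec ?n" unfolding e0_def by simp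
  have He0: "H *\<^sub>v e0 = u"
    by (rule eq_vecI, insert H u Hc, auto simp: e0_def scalar_prod_right_unit)
  define A' where "A' = H * A * H"
  have A': "A' \<in> carrier_mat ?n ?n" unfolding A'_def using H A by auto
  have "A' *\<^sub>v e0 = H *\<^sub>v (A *\<^sub>v (H *\<^sub>v e0))"
    unfolding A'_def using H A e0 by (simp add: assoc_mult_mat_vec[of _ ?n ?n _ ?n])
  also have "\<dots> = e \<cdot>\<^sub>v (H *\<^sub>v (H *\<^sub>v e0))" using He0 Au H u by (simp add: mult_mat_vec)
  also have "H *\<^sub>v (H *\<^sub>v e0) = e0" using H e0 HH
    by (metis assoc_mult_mat_vec one_mult_mat_vec)
  finally have A'e0: "A' *\<^sub>v e0 = e \<cdot>\<^sub>v e0" .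
  have col0: "A' $$ (i,0) = (if i = 0 then e else 0)" if i: "i < ?n" for i
  proof -
    have "(A' *\<^sub>v e0) $ i = A' $$ (i,0)" using i A' by (simp add: e0_def scalar_prod_right_unit)
    hence "A' $$ (i,0) = e * (if i = 0 then 1 else 0)" using A'e0 i by (simp add: e0_def)
    thus ?thesis by simp
  qed
  have AT: "A\<^sup>T = A" by (rule eq_matI, insert A sym, auto)
  have A'T: "A'\<^sup>T = A'"
  proof -
    have HA: "H * A \<in> carrier_mat ?n ?n" using H A by simp
    have "(H * A * H)\<^sup>T = H\<^sup>T * (H * A)\<^sup>T" by (rule transpose_mult[OF HA H])
    also have "(H * A)\<^sup>T = A\<^sup>T * H\<^sup>T" by (rule transpose_mult[OF H A])
    also have "H\<^sup>T * (A\<^sup>T * H\<^sup>T) = H * A * H" unfolding AT HT by (rule assoc_mult_mat[OF H A H, symmetric])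
    finally show ?thesis unfolding A'_def .
  qed
  have A'sym: "A' $$ (i,j) = A' $$ (j,i)" if "i < ?n" "j < ?n" for i j
    using arg_cong[OF A'T, of "\<lambda>M. M $$ (j,i)"] that A' by simp
  define A3 where "A3 = mat m m (\<lambda>(i,j). A' $$ (Suc i, Suc j))"
  have A3: "A3 \<in> carrier_mat m m" unfolding A3_def by simp
  have A3sym: "\<forall>i<m. \<forall>j<m. A3 $$ (i,j) = A3 $$ (j,i)" unfolding A3_def using A'sym by auto
  define A1 where "A1 = mat 1 1 (\<lambda>_. e)"
  have A1: "A1 \<in> carrier_mat 1 1" unfolding A1_def by simp
  have A'blk: "A' = four_block_mat A1 (0\<^sub>m 1 m) (0\<^sub>m m 1) A3"
  proof (rule eq_matI)
    fix i j assume "i < dim_row (four_block_mat A1 (0\<^sub>m 1 m) (0\<^sub>m m 1) A3)"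
      "j < dim_col (four_block_mat A1 (0\<^sub>m 1 m) (0\<^sub>m m 1) A3)"
    hence i: "i < ?n" and j: "j < ?n" using A1 A3 by auto
    show "A' $$ (i,j) = four_block_mat A1 (0\<^sub>m 1 m) (0\<^sub>m m 1) A3 $$ (i,j)"
    proof (cases "j = 0")
      case True thus ?thesis using i A1 A3 col0[OF i] by (auto simp: A1_def)
    next
      case False
      show ?thesis
      proof (cases "i = 0")
        case True thus ?thesis using A1 A3 col0[OF j] A'sym[OF i j] False j by (auto simp: A1_def)
      next
        case i0: False
        thus ?thesis using A1 A3 False i j by (cases i; cases j; auto simp: A3_def)
      qed
    qed
  qed (insert A' A1 A3, auto)
  from Suc.IH[OF A3 A3sym] obtain P3 D3 where sim3: "similar_mat_wit A3 D3 P3 P3\<^sup>T"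
    and D3: "diagonal_mat D3" by auto
  from similar_mat_witD2[OF A3 sim3] have P3: "P3 \<in> carrier_mat m m" and D3c: "D3 \<in> carrier_mat m m" by auto
  define BP where "BP = four_block_mat (1\<^sub>m 1) (0\<^sub>m 1 m) (0\<^sub>m m 1) P3"
  define D where "D = four_block_mat A1 (0\<^sub>m 1 m) (0\<^sub>m m 1) D3"
  have BPT: "BP\<^sup>T = four_block_mat (1\<^sub>m 1) (0\<^sub>m 1 m) (0\<^sub>m m 1) P3\<^sup>T"
    unfolding BP_def using P3 by (simp add: transpose_four_block_mat[of _ 1 1 _ m _ m])
  have sim4: "similar_mat_wit A' D BP BP\<^sup>T"
    unfolding BPT unfolding BP_def D_def A'blk
    by (rule similar_mat_wit_four_block[OF similar_mat_wit_refl[OF A1] sim3 _ _ A1 A3], insert P3, auto)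
  have BP: "BP \<in> carrier_mat ?n ?n" unfolding BP_def using P3 by auto
  have simH: "similar_mat_wit A A' H H"
  proof (rule similar_mat_witI[OF HH HH _ A A' H H])
    have "H * A' * H = (H * H) * A * (H * H)" unfolding A'_def using H A
      by (simp add: assoc_mult_mat[of _ ?n ?n _ ?n _ ?n])
    thus "A = H * A' * H" using HH A by simp
  qed
  have simt: "similar_mat_wit A D (H * BP) (BP\<^sup>T * H)"
    by (rule similar_mat_wit_trans[OF simH sim4])
  have "(H * BP)\<^sup>T = BP\<^sup>T * H" using H BP by (simp add: transpose_mult HT)
  hence simt': "similar_mat_wit A D (H * BP) (H * BP)\<^sup>T" using simt by simp
  have "diagonal_mat D" unfolding diagonal_mat_def D_def using D3 D3c A1
    by (auto simp: diagonal_mat_def A1_def)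
  thus ?case using simt' by blast
qed
lemma prod_list_map_upt: "prod_list (map f [0..<n]) = (\<Prod>i<n. f i)"
  by (induction n) (auto simp: lessThan_Suc mult.commute)

lemma order_prod_lin:
  fixes d :: "nat \<Rightarrow> real"
  shows "order x (\<Prod>i<n. [:-(d i), 1:]) = (\<Sum>i<n. if d i = x then 1 else 0)"
proof (induction n)
  case 0 thus ?case by (simp add: order_1_eq_0)
next
  case (Suc n)
  have p1: "(\<Prod>i<n. [:-(d i), 1:]) \<noteq> (0::real poly)" by (subst prod_zero_iff) auto
  have p2: "[:-(d n), 1:] \<noteq> (0::real poly)" by simp
  have nz: "(\<Prod>i<n. [:-(d i), 1:]) * [:-(d n), 1:] \<noteq> 0" using p1 p2 by (metis mult_eq_0_iff)
  show ?case unfolding prod.lessThan_Suc sum.lessThan_Suc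
    using order_mult[OF nz, of x] Suc by (simp add: order_linear')
qed

lemma count_prod:
  fixes d :: "nat \<Rightarrow> real"
  shows "(\<Sum>x\<in>{x. poly (\<Prod>i<n. [:-(d i),1:]) x = 0 \<and> x \<in> I}. order x (\<Prod>i<n. [:-(d i),1:]))
     = card {i. i < n \<and> d i \<in> I}"
proof -
  let ?p = "\<Prod>i<n. [:-(d i),1:]"
  have R: "{x. poly ?p x = 0 \<and> x \<in> I} = d ` {..<n} \<inter> I"
    by (auto simp: poly_prod prod_zero_iff)
  have "(\<Sum>x\<in>d ` {..<n} \<inter> I. order x ?p) = (\<Sum>x\<in>d ` {..<n} \<inter> I. \<Sum>i<n. if d i = x then 1 else 0)"
    by (simp add: order_prod_lin)
  also have "\<dots> = (\<Sum>i<n. \<Sum>x\<in>d ` {..<n} \<inter> I. if d i = x then 1 else 0)" by (rule sum.swap)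
  also have "\<dots> = (\<Sum>i<n. if d i \<in> I then 1 else 0)"
    by (rule sum.cong, simp, auto simp: sum.delta')
  also have "\<dots> = card {i\<in>{..<n}. d i \<in> I}"
    by (simp add: sum.inter_filter[symmetric])
  finally show ?thesis unfolding R by simp
qed

lemma real_degree: "real (degree n E k) = (\<Sum>l<n. if E k l then 1 else 0)"
proof -
  have "degree n E k = card {l\<in>{..<n}. E k l}" unfolding degree_def by (simp add: lessThan_def conj_commute)
  also have "\<dots> = (\<Sum>l<n. if E k l then 1 else 0)" by (simp add: sum.inter_filter[symmetric])
  finally have "real (degree n E k) = real (\<Sum>l<n. if E k l then 1 else 0)" by simp
  also have "\<dots> = (\<Sum>l<n. real (if E k l then 1 else 0))" by (rule of_nat_sum)
  also have "\<dots> = (\<Sum>l<n. if E k l then 1 else 0)" by (rule sum.cong) auto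
  finally show ?thesis .
qed

lemma lap_entry: "k < n \<Longrightarrow> l < n \<Longrightarrow> laplacian n E $$ (k,l) =
   (if k = l then real (degree n E k) else 0) - (if E k l then 1 else 0)"
  unfolding laplacian_def by simp

lemma lap_psd:
  assumes G: "simple_graph n E"
  shows "0 \<le> (\<Sum>k<n. \<Sum>l<n. x k * laplacian n E $$ (k,l) * x l)"
proof -
  have sym: "\<And>k l. k < n \<Longrightarrow> l < n \<Longrightarrow> E k l = E l k" using G unfolding simple_graph_def by auto
  define T1 where "T1 = (\<Sum>k<n. \<Sum>l<n. if E k l then x k * x k else 0)"
  define T1' where "T1' = (\<Sum>k<n. \<Sum>l<n. if E k l then x l * x l else 0)"
  define T2 where "T2 = (\<Sum>k<n. \<Sum>l<n. if E k l then x k * x l else 0)"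
  have step: "(\<Sum>l<n. x k * laplacian n E $$ (k,l) * x l) = 
     (\<Sum>l<n. if E k l then x k * x k else 0) - (\<Sum>l<n. if E k l then x k * x l else 0)" if k: "k < n" for k
  proof -
    have "(\<Sum>l<n. x k * laplacian n E $$ (k,l) * x l) = (\<Sum>l<n. (if k = l then x k * real (degree n E k) * x l else 0) - (if E k l then x k * x l else 0))"
      by (rule sum.cong) (auto simp: lap_entry k algebra_simps)
    also have "\<dots> = (\<Sum>l<n. if k = l then x k * real (degree n E k) * x l else 0) - (\<Sum>l<n. if E k l then x k * x l else 0)"
      by (rule sum_subtractf)
    also have "(\<Sum>l<n. if k = l then x k * real (degree n E k) * x l else 0) = x k * real (degree n E k) * x k"
      using k by simp
    also have "x k * real (degree n E k) * x k = (\<Sum>l<n. if E k l then x k * x k else 0)"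
      unfolding real_degree by (simp add: sum_distrib_left sum_distrib_right if_distrib[of "\<lambda>t. _ * t"] if_distrib[of "\<lambda>t. t * _"] cong: if_cong)
    finally show ?thesis .
  qed
  have "(\<Sum>k<n. \<Sum>l<n. x k * laplacian n E $$ (k,l) * x l) = (\<Sum>k<n. (\<Sum>l<n. if E k l then x k * x k else 0) - (\<Sum>l<n. if E k l then x k * x l else 0))"
    by (rule sum.cong) (auto simp: step)
  hence Q: "(\<Sum>k<n. \<Sum>l<n. x k * laplacian n E $$ (k,l) * x l) = T1 - T2"
    unfolding T1_def T2_def by (simp only: sum_subtractf)
  have "T1 = T1'" unfolding T1_def T1'_def
    by (subst sum.swap, rule sum.cong, simp, rule sum.cong, simp, auto simp: sym)
  have "T1 + T1' - 2 * T2 = (\<Sum>k<n. \<Sum>l<n. (if E k l then x k * x k else 0) + (if E k l then x l * x l else 0) - 2 * (if E k l then x k * x l else 0))"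
    unfolding T1_def T1'_def T2_def by (simp add: sum.distrib sum_subtractf sum_distrib_left)
  also have "\<dots> = (\<Sum>k<n. \<Sum>l<n. if E k l then (x k - x l)^2 else 0)"
    by (intro sum.cong refl) (auto simp: power2_eq_square algebra_simps)
  also have "\<dots> \<ge> 0" by (intro sum_nonneg) auto
  finally have "0 \<le> T1 + T1' - 2 * T2" .
  thus ?thesis unfolding Q using \<open>T1 = T1'\<close> by simp
qed

lemma quad_form:
  fixes P :: "nat \<Rightarrow> nat \<Rightarrow> real"
  shows "(\<Sum>k<n. \<Sum>l<n. x k * (\<Sum>j<n. P k j * d j * P l j) * x l)
    = (\<Sum>j<n. d j * (\<Sum>k<n. P k j * x k) * (\<Sum>k<n. P k j * x k))"
proof -
  have "(\<Sum>k<n. \<Sum>l<n. x k * (\<Sum>j<n. P k j * d j * P l j) * x l)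
      = (\<Sum>k<n. \<Sum>l<n. \<Sum>j<n. d j * (P k j * x k) * (P l j * x l))"
    by (simp add: sum_distrib_left sum_distrib_right mult_ac)
  also have "\<dots> = (\<Sum>k<n. \<Sum>j<n. \<Sum>l<n. d j * (P k j * x k) * (P l j * x l))"
    by (rule sum.cong, simp, rule sum.swap)
  also have "\<dots> = (\<Sum>j<n. \<Sum>k<n. \<Sum>l<n. d j * (P k j * x k) * (P l j * x l))"
    by (rule sum.swap)
  also have "\<dots> = (\<Sum>j<n. d j * (\<Sum>k<n. P k j * x k) * (\<Sum>k<n. P k j * x k))"
    by (simp add: sum_distrib_left sum_distrib_right mult_ac)
  finally show ?thesis .
qed

lemma kernel_exists:
  fixes q :: "nat \<Rightarrow> nat \<Rightarrow> real"
  assumes ka: "k < a"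
  shows "\<exists>z::nat\<Rightarrow>real. (\<exists>t<a. z t \<noteq> 0) \<and> (\<forall>j<k. (\<Sum>t<a. q j t * z t) = 0)"
proof -
  define M where "M = mat a a (\<lambda>(j,t). if j < k then q j t else 0)"
  have Mc: "M \<in> carrier_mat a a" unfolding M_def by simp
  define R where "R = mat\<^sub>r a a (\<lambda>i. if i = a - 1 then 0\<^sub>v a else row M i)"
  have eq: "M = R"
  proof (rule eq_matI)
    fix i j assume "i < dim_row R" "j < dim_col R"
    hence i: "i < a" and j: "j < a" unfolding R_def by auto
    show "M $$ (i,j) = R $$ (i,j)"
    proof (cases "i = a - 1")
      case True
      hence "\<not> i < k" using ka by auto
      thus ?thesis using i j True unfolding R_def by (simp add: M_def)
    next
      case False
      thus ?thesis using i j Mc unfolding R_def by simp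
    qed
  qed (auto simp: R_def M_def)
  have "det R = 0" unfolding R_def
    by (rule det_row_0, insert ka Mc, auto)
  hence "det M = 0" using eq by metis
  then obtain v where v: "v \<in> carrier_vec a" "v \<noteq> 0\<^sub>v a" "M *\<^sub>v v = 0\<^sub>v a"
    using det_0_iff_vec_prod_zero_field[OF Mc] by auto
  have "\<exists>t<a. v $ t \<noteq> 0"
  proof (rule ccontr)
    assume "\<not> ?thesis"
    hence "v = 0\<^sub>v a" using v by (intro eq_vecI) auto
    thus False using v by simp
  qed
  moreover have "(\<Sum>t<a. q j t * v $ t) = 0" if j: "j < k" for j
  proof -
    have "(M *\<^sub>v v) $ j = 0" using v j ka by simp
    thus ?thesis using j ka v by (simp add: M_def scalar_prod_def lessThan_atLeast0)
  qed
  ultimately show ?thesis by (intro exI[of _ "\<lambda>t. v $ t"]) auto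
qed


theorem mainTheorem1:
  fixes n :: nat and E :: "nat \<Rightarrow> nat \<Rightarrow> bool"
  assumes "simple_graph n E"
  shows "independence_number n E
           \<le> lap_eig_count n E {0 .. real n - real (independence_number n E)}"
proof -
  note G = assms
  define \<alpha> where "\<alpha> = independence_number n E"
  define L where "L = laplacian n E"
  define c where "c = real n - real \<alpha>"
  have Lc: "L \<in> carrier_mat n n" by (simp add: L_def laplacian_def)
  have Lsym: "\<forall>i<n. \<forall>j<n. L $$ (i,j) = L $$ (j,i)"
    using G by (auto simp: L_def lap_entry simple_graph_def)
  obtain P D where sim: "similar_mat_wit L D P P\<^sup>T" and Dd: "diagonal_mat D"
    using spectral_real[OF Lc Lsym] by auto
  from similar_mat_witD2[OF Lc sim] have PPT: "P * P\<^sup>T = 1\<^sub>m n" and PTP: "P\<^sup>T * P = 1\<^sub>m n"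
    and LPD: "L = P * D * P\<^sup>T" and Dc: "D \<in> carrier_mat n n" and Pc: "P \<in> carrier_mat n n" by auto
  define d where "d i = D $$ (i,i)" for i
  define p where "p k j = P $$ (k,j)" for k j
  have ut: "upper_triangular D" using Dd Dc unfolding upper_triangular_def diagonal_mat_def by auto
  have "char_poly L = char_poly D" by (rule char_poly_similar, insert sim, auto simp: similar_mat_def)
  also have "\<dots> = (\<Prod>a\<leftarrow>diag_mat D. [:-a,1:])" by (rule char_poly_upper_triangular[OF Dc ut])
  also have "\<dots> = (\<Prod>i<n. [:-(d i),1:])" using Dc
    by (simp add: diag_mat_def d_def o_def prod_list_map_upt[where f = "\<lambda>i. [:-(D $$ (i,i)),1:]", symmetric])
  finally have cp: "char_poly L = (\<Prod>i<n. [:-(d i),1:])" .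
  have count: "lap_eig_count n E I = card {i. i < n \<and> d i \<in> I}" for I
    unfolding lap_eig_count_def L_def[symmetric] cp by (rule count_prod)
  have orth1: "(\<Sum>k<n. p k j * p k i) = (if j = i then 1 else 0)" if "i < n" "j < n" for i j
  proof -
    have "(P\<^sup>T * P) $$ (j,i) = (\<Sum>k<n. p k j * p k i)"
      using that Pc by (simp add: p_def scalar_prod_def lessThan_atLeast0)
    thus ?thesis using PTP that by simp
  qed
  have orth2: "(\<Sum>j<n. p k j * p l j) = (if k = l then 1 else 0)" if "k < n" "l < n" for k l
  proof -
    have "(P * P\<^sup>T) $$ (k,l) = (\<Sum>j<n. p k j * p l j)"
      using that Pc by (simp add: p_def scalar_prod_def lessThan_atLeast0)
    thus ?thesis using PPT that by simp
  qed
  have Lent: "L $$ (k,l) = (\<Sum>j<n. p k j * d j * p l j)" if k: "k < n" and l: "l < n" for k l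
  proof -
    have PD: "(P * D) $$ (k,j) = p k j * d j" if j: "j < n" for j
    proof -
      have "(P * D) $$ (k,j) = (\<Sum>i<n. p k i * D $$ (i,j))"
        using k j Pc Dc by (simp add: p_def scalar_prod_def lessThan_atLeast0)
      also have "\<dots> = (\<Sum>i<n. if i = j then p k j * d j else 0)"
        by (rule sum.cong, simp, insert Dd Dc j, auto simp: diagonal_mat_def d_def)
      finally show ?thesis using j by simp
    qed
    define PD where "PD = P * D"
    have PDc: "PD \<in> carrier_mat n n" unfolding PD_def using Pc Dc by simp
    have "L $$ (k,l) = (\<Sum>j<n. PD $$ (k,j) * P\<^sup>T $$ (j,l))"
      unfolding LPD PD_def[symmetric] using k l Pc PDc by (simp add: scalar_prod_def lessThan_atLeast0)
    also have "\<dots> = (\<Sum>j<n. p k j * d j * p l j)"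
      by (rule sum.cong, simp, insert l Pc, auto simp: PD[unfolded PD_def[symmetric]] p_def)
    finally show ?thesis .
  qed
  have QF: "(\<Sum>k<n. \<Sum>l<n. x k * L $$ (k,l) * x l)
     = (\<Sum>j<n. d j * (\<Sum>k<n. p k j * x k) * (\<Sum>k<n. p k j * x k))" for x
  proof -
    have "(\<Sum>k<n. \<Sum>l<n. x k * L $$ (k,l) * x l) = (\<Sum>k<n. \<Sum>l<n. x k * (\<Sum>j<n. p k j * d j * p l j) * x l)"
      by (intro sum.cong refl) (simp add: Lent)
    thus ?thesis by (simp add: quad_form)
  qed
  have NF: "(\<Sum>k<n. x k * x k) = (\<Sum>j<n. (\<Sum>k<n. p k j * x k) * (\<Sum>k<n. p k j * x k))" for x
  proof -
    have "(\<Sum>k<n. x k * x k) = (\<Sum>k<n. \<Sum>l<n. x k * (\<Sum>j<n. p k j * 1 * p l j) * x l)"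
      by (rule sum.cong, simp, simp add: orth2 if_distrib[of "\<lambda>t. _ * t"] if_distrib[of "\<lambda>t. t * _"] cong: if_cong)
    also have "\<dots> = (\<Sum>j<n. 1 * (\<Sum>k<n. p k j * x k) * (\<Sum>k<n. p k j * x k))"
      by (rule quad_form)
    finally show ?thesis by simp
  qed
  have dnn: "d i \<ge> 0" if i: "i < n" for i
  proof -
    have "0 \<le> (\<Sum>k<n. \<Sum>l<n. p k i * L $$ (k,l) * p l i)"
      unfolding L_def by (rule lap_psd[OF G])
    also have "\<dots> = (\<Sum>j<n. d j * (\<Sum>k<n. p k j * p k i) * (\<Sum>k<n. p k j * p k i))" by (rule QF)
    also have "\<dots> = (\<Sum>j<n. if j = i then d i else 0)"
      by (rule sum.cong, simp, auto simp: orth1 i)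
    also have "\<dots> = d i" using i by simp
    finally show ?thesis .
  qed
  show ?thesis
  proof (rule ccontr)
    assume "\<not> ?thesis"
    hence lt: "card {i. i < n \<and> d i \<in> {0..c}} < \<alpha>" unfolding count c_def \<alpha>_def by simp
    define K where "K = {i. i < n \<and> d i \<le> c}"
    have Keq: "K = {i. i < n \<and> d i \<in> {0..c}}" unfolding K_def using dnn by auto
    have finK: "finite K" unfolding K_def by auto
    define k where "k = card K"
    have ka: "k < \<alpha>" using lt Keq k_def by simp
    have finI: "finite {S. independent_set n E S}"
      by (rule finite_subset[of _ "Pow {0..<n}"]) (auto simp: independent_set_def)
    have "{} \<in> {S. independent_set n E S}" by (simp add: independent_set_def)
    hence "\<alpha> \<in> card ` {S. independent_set n E S}" unfolding \<alpha>_def independence_number_def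
      using finI by (intro Max_in) auto
    then obtain S where S: "independent_set n E S" and cS: "card S = \<alpha>" by auto
    have Sn: "S \<subseteq> {0..<n}" and Sind: "\<And>u v. u \<in> S \<Longrightarrow> v \<in> S \<Longrightarrow> \<not> E u v"
      using S unfolding independent_set_def by auto
    have finS: "finite S" using Sn finite_subset by blast
    have an: "\<alpha> \<le> n" using card_mono[OF _ Sn] cS by simp
    have degS: "real (degree n E s) \<le> c" if s: "s \<in> S" for s
    proof -
      have "{u. u < n \<and> E s u} \<subseteq> {0..<n} - S" using Sind s by auto
      hence "degree n E s \<le> card ({0..<n} - S)" unfolding degree_def by (intro card_mono) auto
      also have "\<dots> = n - \<alpha>" using card_Diff_subset[OF finS Sn] cS by simp
      finally show ?thesis unfolding c_def using an by linarith
    qed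
    obtain f where f: "bij_betw f {0..<\<alpha>} S" using ex_bij_betw_nat_finite[OF finS] cS by auto
    obtain g where g: "bij_betw g {0..<k} K" using ex_bij_betw_nat_finite[OF finK] k_def by auto
    obtain z where z: "\<exists>t<\<alpha>. z t \<noteq> 0" and zk: "\<forall>j<k. (\<Sum>t<\<alpha>. p (f t) (g j) * z t) = 0"
      using kernel_exists[OF ka, of "\<lambda>j t. p (f t) (g j)"] by auto
    define x where "x v = (if v \<in> S then z (inv_into {0..<\<alpha>} f v) else 0)" for v
    define y where "y j = (\<Sum>k<n. p k j * x k)" for j
    have xf: "x (f t) = z t" if "t < \<alpha>" for t
    proof -
      have "f t \<in> S" using f that by (auto simp: bij_betw_def)
      moreover have "inv_into {0..<\<alpha>} f (f t) = t" using f that by (auto simp: bij_betw_def inv_into_f_f)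
      ultimately show ?thesis unfolding x_def by simp
    qed
    have ysum: "y i = (\<Sum>t<\<alpha>. p (f t) i * z t)" for i
    proof -
      have "y i = (\<Sum>v\<in>S. p v i * x v)" unfolding y_def
        by (rule sum.mono_neutral_right, insert Sn, auto simp: x_def)
      also have "\<dots> = (\<Sum>t\<in>{0..<\<alpha>}. p (f t) i * x (f t))"
        by (rule sum.reindex_bij_betw[OF f, symmetric])
      also have "\<dots> = (\<Sum>t<\<alpha>. p (f t) i * z t)"
        by (rule sum.cong, auto simp: xf)
      finally show ?thesis .
    qed
    have yK: "y i = 0" if iK: "i \<in> K" for i
    proof -
      obtain j where "j < k" "i = g j" using g iK by (auto simp: bij_betw_def)
      thus ?thesis using zk ysum by auto
    qed
    obtain t where t: "t < \<alpha>" "z t \<noteq> 0" using z by auto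
    have "f t \<in> S" using f t by (auto simp: bij_betw_def)
    hence ftn: "f t < n" using Sn by auto
    have xpos: "(\<Sum>v<n. x v * x v) > 0"
    proof -
      have "x (f t) * x (f t) > 0" using xf t by (auto simp: zero_less_mult_iff linorder_neq_iff)
      moreover have "(\<Sum>v<n. x v * x v) \<ge> x (f t) * x (f t)"
        by (rule member_le_sum, insert ftn, auto)
      ultimately show ?thesis by simp
    qed
    have row: "(\<Sum>l<n. x v * L $$ (v,l) * x l) = real (degree n E v) * (x v * x v)" if v: "v < n" for v
    proof (cases "v \<in> S")
      case False thus ?thesis by (simp add: x_def)
    next
      case True
      have "(\<Sum>l<n. x v * L $$ (v,l) * x l) = (\<Sum>l<n. if l = v then real (degree n E v) * (x v * x v) else 0)"
      proof (rule sum.cong)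
        fix l assume "l \<in> {..<n}"
        hence l: "l < n" by simp
        show "x v * L $$ (v,l) * x l = (if l = v then real (degree n E v) * (x v * x v) else 0)"
        proof (cases "l = v")
          case lv: True
          have "\<not> E v v" using G v unfolding simple_graph_def by auto
          thus ?thesis using lv l by (simp add: L_def lap_entry)
        next
          case False
          show ?thesis
          proof (cases "l \<in> S")
            case True
            hence "\<not> E v l" using Sind \<open>v \<in> S\<close> by auto
            thus ?thesis using False v l by (simp add: L_def lap_entry)
          next
            case nS: False thus ?thesis using False by (simp add: x_def)
          qed
        qed
      qed simp
      thus ?thesis using v by simp
    qed
    have up: "(\<Sum>k<n. \<Sum>l<n. x k * L $$ (k,l) * x l) \<le> c * (\<Sum>v<n. x v * x v)"
    proof -
      have "(\<Sum>k<n. \<Sum>l<n. x k * L $$ (k,l) * x l) = (\<Sum>v<n. real (degree n E v) * (x v * x v))"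
        by (rule sum.cong) (auto simp: row)
      also have "\<dots> \<le> (\<Sum>v<n. c * (x v * x v))"
      proof (rule sum_mono)
        fix v assume "v \<in> {..<n}"
        show "real (degree n E v) * (x v * x v) \<le> c * (x v * x v)"
        proof (cases "v \<in> S")
          case True thus ?thesis using degS by (simp add: mult_right_mono)
        next
          case False thus ?thesis by (simp add: x_def)
        qed
      qed
      also have "\<dots> = c * (\<Sum>v<n. x v * x v)" by (simp add: sum_distrib_left)
      finally show ?thesis .
    qed
    have ypos: "(\<Sum>j<n. y j * y j) > 0" using xpos NF[of x] unfolding y_def by simp
    obtain j where j: "j < n" "y j \<noteq> 0"
    proof (rule ccontr)
      assume "\<not> thesis"
      hence "\<forall>j<n. y j = 0" using that by blast
      hence "(\<Sum>j<n. y j * y j) = 0" by simp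
      thus False using ypos by simp
    qed
    have jK: "j \<notin> K" using yK j by auto
    have low: "c * (\<Sum>j<n. y j * y j) < (\<Sum>j<n. d j * y j * y j)"
    proof -
      have "(\<Sum>j<n. c * (y j * y j)) < (\<Sum>j<n. d j * y j * y j)"
      proof (rule sum_strict_mono_ex1)
        show "\<forall>i\<in>{..<n}. c * (y i * y i) \<le> d i * y i * y i"
        proof
          fix i assume i: "i \<in> {..<n}"
          show "c * (y i * y i) \<le> d i * y i * y i"
          proof (cases "i \<in> K")
            case True thus ?thesis using yK by simp
          next
            case False
            hence "c < d i" using i unfolding K_def by auto
            thus ?thesis by (simp add: mult.assoc mult_right_mono)
          qed
        qed
        have "c < d j" using jK j unfolding K_def by auto
        moreover have "y j * y j > 0" using j by (auto simp: zero_less_mult_iff linorder_neq_iff)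
        ultimately have "c * (y j * y j) < d j * y j * y j"
          by (simp add: mult.assoc mult_strict_right_mono)
        thus "\<exists>i\<in>{..<n}. c * (y i * y i) < d i * y i * y i" using j by auto
      qed simp
      thus ?thesis by (simp add: sum_distrib_left)
    qed
    have "(\<Sum>k<n. \<Sum>l<n. x k * L $$ (k,l) * x l) = (\<Sum>j<n. d j * y j * y j)"
      unfolding QF y_def ..
    moreover have "(\<Sum>v<n. x v * x v) = (\<Sum>j<n. y j * y j)" unfolding y_def by (rule NF)
    ultimately show False using up low by simp
  qed
qed

end
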